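(* Let $\mathcal{M}=\langle S,\to,L\rangle$ be a labeled transition system, let $B\subseteq S\times S$ be a skipping simulation on $\mathcal{M}$, and let $\kappa$ be a cardinal with $\omega\preceq\kappa$ and $|S|\preceq\kappa$. Then for all $s,w\in S$, $\mathit{size}(\mathit{ranktCt}(\mathcal{M},s,w))$ is an ordinal of cardinality at most $\kappa$.
   Context: A labeled transition system is $\mathcal{M}=\langle S,\to,L\rangle$ where $S$ is a non-empty set of states, $\to\subseteq S\times S$ is left-total, and $L$ is a function with domain $S$. A fullpath is an infinite sequence $\sigma$ with $\sigma(i)\to\sigma(i+1)$ for all $i$; it starts at $\sigma(0)$. $w\to^{+}v$ means there is a finite path $w=v_0\to\cdots\to v_k=v$ with $k\ge1$. Let $\mathit{INC}$ be the set of strictly increasing infinite sequences of naturals starting at $0$. For a fullpath $\sigma$ and $\pi\in\mathit{INC}$ the $i$-th segment of $\sigma$ is $\sigma(\pi(i)),\dots,\sigma(\pi(i+1)-1)$. $\mathit{match}(B,\sigma,\delta)$ holds iff there exist $\pi,\xi\in\mathit{INC}$ such that for every $i$ and every state $x$ in the $i$-th segment of $\sigma$ w.r.t. $\pi$, $xB\delta(\xi(i))$. $B$ is a skipping simulation (SKS) iff for all $s,w$ with $sBw$: $L(s)=L(w)$, and for every fullpath $\sigma$ starting at $s$ there is a fullpath $\delta$ starting at $w$ with $\mathit{match}(B,\sigma,\delta)$. The computation tree $\mathit{ctree}(\mathcal{M},s)$ has as nodes finite sequences over $S$; it is the smallest tree such that $\langle s\rangle$ is the root, and if $\langle s,\dots,x\rangle$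 is a node and $x\to y$ then $\langle s,\dots,x,y\rangle$ is a node whose parent is $\langle s,\dots,x\rangle$. For the SKS $B$: if not $sBw$, $\mathit{ranktCt}(\mathcal{M},s,w)$ is the empty tree; otherwise it is the largest subtree of $\mathit{ctree}(\mathcal{M},s)$ (containing the root) such that every non-root node $\langle s,\dots,x\rangle$ satisfies $xBw$ and, for all $v$ with $w\to^{+}v$, not $xBv$. (Every branch of this tree is finite.) For a tree $t$ all of whose branches are finite, ordinals are assigned to its nodes by $\mathit{size}(t,x)=\bigcup_{c\text{ a child of }x}\mathit{size}(t,c)+1$ (von Neumann ordinals; the union of the successors, so a leaf gets $0$... i.e. the supremum of $\mathit{size}(t,c)+1$ over children $c$), and $\mathit{size}(\mathit{ranktCt}(\mathcal{M},s,w))=\mathit{size}(\mathit{ranktCt}(\mathcal{M},s,w),\langle s\rangle)$. $\preceq$ compares ordinals and cardinals. *)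

theory Defs
  imports Main
begin

definition lts :: "'s set \<Rightarrow> ('s \<times> 's) set \<Rightarrow> bool" where
  "lts S R \<longleftrightarrow> S \<noteq> {} \<and> R \<subseteq> S \<times> S \<and> (\<forall>x\<in>S. \<exists>y. (x, y) \<in> R)"

definition fullpath :: "('s \<times> 's) set \<Rightarrow> (nat \<Rightarrow> 's) \<Rightarrow> bool" where
  "fullpath R \<sigma> \<longleftrightarrow> (\<forall>i. (\<sigma> i, \<sigma> (Suc i)) \<in> R)"

definition INC :: "(nat \<Rightarrow> nat) set" where
  "INC = {\<pi>. strict_mono \<pi> \<and> \<pi> 0 = 0}"

definition match :: "('s \<times> 's) set \<Rightarrow> (nat \<Rightarrow> 's) \<Rightarrow> (nat \<Rightarrow> 's) \<Rightarrow> bool" where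
  "match B \<sigma> \<delta> \<longleftrightarrow> (\<exists>\<pi>\<in>INC. \<exists>\<xi>\<in>INC. \<forall>i k. \<pi> i \<le> k \<and> k < \<pi> (Suc i) \<longrightarrow> (\<sigma> k, \<delta> (\<xi> i)) \<in> B)"

definition SKS :: "('s \<times> 's) set \<Rightarrow> ('s \<Rightarrow> 'l) \<Rightarrow> ('s \<times> 's) set \<Rightarrow> bool" where
  "SKS R L B \<longleftrightarrow> (\<forall>s w. (s, w) \<in> B \<longrightarrow> L s = L w \<and>
     (\<forall>\<sigma>. fullpath R \<sigma> \<and> \<sigma> 0 = s \<longrightarrow> (\<exists>\<delta>. fullpath R \<delta> \<and> \<delta> 0 = w \<and> match B \<sigma> \<delta>)))"

text \<open>Computation tree: nodes are finite sequences (lists); smallest set containing the root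
  and closed under extension by a transition. The parent of \<open>xs @ [y]\<close> is \<open>xs\<close>.\<close>
inductive_set ctree :: "('s \<times> 's) set \<Rightarrow> 's \<Rightarrow> 's list set" for R s where
  root: "[s] \<in> ctree R s"
| step: "xs \<in> ctree R s \<Longrightarrow> (last xs, y) \<in> R \<Longrightarrow> xs @ [y] \<in> ctree R s"

definition ranktCt :: "('s \<times> 's) set \<Rightarrow> ('s \<times> 's) set \<Rightarrow> 's \<Rightarrow> 's \<Rightarrow> 's list set" where
  "ranktCt R B s w =
    (if (s, w) \<notin> B then {}
     else \<Union>{T. T \<subseteq> ctree R s \<and> [s] \<in> T
               \<and> (\<forall>xs\<in>T. length xs \<ge> 2 \<longrightarrow> butlast xs \<in> T)
               \<and> (\<forall>xs\<in>T. length xs \<ge> 2 \<longrightarrow>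
                     (last xs, w) \<in> B \<and> (\<forall>v. (w, v) \<in> R\<^sup>+ \<longrightarrow> (last xs, v) \<notin> B))})"

definition children :: "'s list set \<Rightarrow> 's list \<Rightarrow> 's list set" where
  "children t x = {c \<in> t. \<exists>y. c = x @ [y]}"

text \<open>Ordinals are represented by well-order relations (compared by \<open>ordLeq\<close>/\<open>ordLess\<close>).
  \<open>size_assignment t f\<close>: f assigns to every node x of t the ordinal size(t,x), i.e. the
  least ordinal strictly above all size(t,c) for children c (= sup of size(t,c)+1).
  Leastness is taken among well-orders on the same carrier type.\<close>
definition size_assignment :: "'s list set \<Rightarrow> ('s list \<Rightarrow> 'o rel) \<Rightarrow> bool" where
  "size_assignment t f \<longleftrightarrow> (\<forall>x\<in>t. Well_order (f x)
      \<and> (\<forall>c\<in>children t x. (f c, f x) \<in> ordLess)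
      \<and> (\<forall>r :: 'o rel. Well_order r \<and> (\<forall>c\<in>children t x. (f c, r) \<in> ordLess) \<longrightarrow> (f x, r) \<in> ordLeq))"

end

theory Submission
  imports Defs
begin

unbundle cardinal_syntax

lemma least_bound:
  fixes Q :: "'a rel set"
  assumes inf: "infinite (UNIV::'a set)" and wo: "\<forall>q\<in>Q. Well_order q"
    and cQ: "|Q| \<le>o |UNIV::'a set|"
  shows "\<exists>r::'a rel. Well_order r \<and> (\<forall>q\<in>Q. q <o r) \<and> (\<forall>r'::'a rel. Well_order r' \<and> (\<forall>q\<in>Q. q <o r') \<longrightarrow> r \<le>o r')"
proof -
  have ub: "\<exists>r::'a rel. Well_order r \<and> (\<forall>q\<in>Q. q <o r)"
  proof -
    let ?r0 = "|UNIV::'a set|"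
    let ?W = "cardSuc ?r0"
    have c0: "Card_order ?r0" by (rule card_of_Card_order)
    have f0: "Field ?r0 = UNIV" by (rule Field_card_of)
    have cW: "Card_order ?W" using cardSuc_Card_order c0 by blast
    have wW: "Well_order ?W" using cW by (simp add: card_order_on_def)
    have qW: "q <o ?W" if qQ: "q \<in> Q" for q
    proof -
      have wq: "Well_order q" using wo qQ by blast
      have "|Field q| \<le>o ?r0" by (rule card_of_mono1) simp
      hence lt: "|Field q| <o ?W" using cardSuc_ordLeq_ordLess c0 card_of_Card_order by blast
      show ?thesis
      proof (rule ccontr)
        assume "\<not> q <o ?W"
        hence "?W \<le>o q" using ordLess_or_ordLeq wq wW by blast
        hence "|Field ?W| \<le>o |Field q|" by (rule card_of_mono2)
        moreover have "?W =o |Field ?W|" using card_of_Field_ordIso[OF cW] ordIso_symmetric by blast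
        ultimately have "?W <o ?W" using lt ordIso_ordLeq_trans ordLeq_ordLess_trans by blast
        thus False using ordLess_irreflexive by blast
      qed
    qed
    have "\<forall>q\<in>Q. \<exists>a. a \<in> Field ?W \<and> q =o Restr ?W (underS ?W a)"
      using ordLess_iff_ordIso_Restr[OF wW] wo qW by blast
    then obtain a where a: "\<And>q. q \<in> Q \<Longrightarrow> a q \<in> Field ?W \<and> q =o Restr ?W (underS ?W (a q))"
      by metis
    have trW: "trans ?W" and rfW: "Refl ?W" using wW
      unfolding well_order_on_def linear_order_on_def partial_order_on_def preorder_on_def by auto
    have chain: "relChain ?W (under ?W)"
      unfolding relChain_def under_def using trW unfolding trans_def by blast
    have sub: "a ` Q \<subseteq> (\<Union>i\<in>Field ?W. under ?W i)"
      using a rfW Refl_under_in by fastforce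
    have "|a ` Q| \<le>o ?r0" using card_of_image cQ ordLeq_transitive by blast
    then obtain b where b: "b \<in> Field ?W" "a ` Q \<subseteq> under ?W b"
      using cardSuc_UNION[OF c0 _ chain sub] inf f0 by auto
    have "|underS ?W b| <o ?W" using card_of_underS[OF cW b(1)] .
    hence u1: "|underS ?W b| \<le>o ?r0" using cardSuc_ordLeq_ordLess c0 card_of_Card_order by blast
    have u2: "|{b}| \<le>o ?r0" using Card_order_singl_ordLeq[OF c0] f0 by auto
    have ueq: "under ?W b = {b} \<union> underS ?W b"
      using rfW b(1) Refl_under_in unfolding under_def underS_def by auto
    have "|under ?W b| \<le>o ?r0" unfolding ueq
      using card_of_Un_ordLeq_infinite_Field[OF _ u2 u1 c0] inf f0 by simp
    then obtain h :: "'a set \<Rightarrow> 'a" where h: "inj_on h (under ?W b)"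
      using card_of_ordLeq[of "under ?W b" "UNIV::'a set"] by auto
    let ?R = "Restr ?W (under ?W b)"
    have wR: "Well_order ?R" using Well_order_Restr wW by blast
    have ofb: "wo_rel.ofilter ?W (under ?W b)" by (rule wo_rel.under_ofilter) (simp add: wo_rel_def wW)
    have fR: "Field ?R = under ?W b" using Field_Restr_ofilter[OF wW ofb] .
    have iso: "?R =o dir_image ?R h" using dir_image_ordIso[OF wR] h fR by simp
    have lt: "q <o dir_image ?R h" if qQ: "q \<in> Q" for q
    proof -
      have ofa: "wo_rel.ofilter ?W (underS ?W (a q))" by (rule wo_rel.underS_ofilter) (simp add: wo_rel_def wW)
      have "a q \<in> under ?W b" using b qQ by blast
      hence "underS ?W (a q) \<subset> under ?W b"
        using trW unfolding under_def underS_def trans_def by blast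
      hence "Restr ?W (underS ?W (a q)) <o ?R" using ofilter_subset_ordLess[OF wW ofa ofb] by blast
      thus ?thesis using a[OF qQ] iso ordIso_ordLess_trans ordLess_ordIso_trans by blast
    qed
    have "Well_order (dir_image ?R h)" using Well_order_dir_image[OF wR] h fR by simp
    thus ?thesis using lt by blast
  qed
  let ?U = "{r::'a rel. Well_order r \<and> (\<forall>q\<in>Q. q <o r)}"
  have "?U \<noteq> {}" using ub by blast
  then obtain m where m1: "m \<in> ?U" and m2: "\<forall>r'\<in>?U. m \<le>o r'" using exists_minim_Well_order[of ?U] by blast
  show ?thesis using m1 m2 by (intro exI[of _ m]) auto
qed

lemma exists_rank:
  fixes t :: "'n set" and ch :: "'n \<Rightarrow> 'n set"
  assumes wf: "wf {(c,x). x \<in> t \<and> c \<in> ch x}" and sub: "\<forall>x\<in>t. ch x \<subseteq> t"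
    and cardch: "\<forall>x\<in>t. |ch x| \<le>o |UNIV :: 'a set|" and inf: "infinite (UNIV :: 'a set)"
  shows "\<exists>f :: 'n \<Rightarrow> 'a rel. \<forall>x\<in>t. Well_order (f x) \<and> (\<forall>c\<in>ch x. f c <o f x)
            \<and> (\<forall>r::'a rel. Well_order r \<and> (\<forall>c\<in>ch x. f c <o r) \<longrightarrow> f x \<le>o r)"
proof -
  define Rel where "Rel = {(c,x). x \<in> t \<and> c \<in> ch x}"
  have wfR: "wf Rel" using wf unfolding Rel_def .
  define G where "G = (\<lambda>Q::'a rel set. SOME r::'a rel. Well_order r \<and> (\<forall>q\<in>Q. q <o r)
      \<and> (\<forall>r'::'a rel. Well_order r' \<and> (\<forall>q\<in>Q. q <o r') \<longrightarrow> r \<le>o r'))"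
  define f where "f = wfrec Rel (\<lambda>\<phi> x. G (\<phi> ` ch x))"
  have feq: "f x = G (f ` ch x)" if "x \<in> t" for x
  proof -
    have "f x = G (cut f Rel x ` ch x)" unfolding f_def by (subst wfrec[OF wfR]) simp
    also have "cut f Rel x ` ch x = f ` ch x" using that by (auto simp: cut_apply Rel_def)
    finally show ?thesis .
  qed
  have P: "x \<in> t \<longrightarrow> (Well_order (f x) \<and> (\<forall>c\<in>ch x. f c <o f x)
            \<and> (\<forall>r::'a rel. Well_order r \<and> (\<forall>c\<in>ch x. f c <o r) \<longrightarrow> f x \<le>o r))" for x
  proof (induction x rule: wf_induct_rule[OF wfR])
    case (1 x)
    show ?case
    proof
      assume xt: "x \<in> t"
      have wc: "\<forall>q\<in>f ` ch x. Well_order q" using 1 xt sub unfolding Rel_def by auto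
      have cq: "|f ` ch x| \<le>o |UNIV::'a set|" using card_of_image cardch xt ordLeq_transitive by blast
      have "Well_order (G (f ` ch x)) \<and> (\<forall>q\<in>f ` ch x. q <o G (f ` ch x))
      \<and> (\<forall>r'::'a rel. Well_order r' \<and> (\<forall>q\<in>f ` ch x. q <o r') \<longrightarrow> G (f ` ch x) \<le>o r')"
        unfolding G_def by (rule someI_ex) (rule least_bound[OF inf wc cq])
      then show "Well_order (f x) \<and> (\<forall>c\<in>ch x. f c <o f x)
            \<and> (\<forall>r::'a rel. Well_order r \<and> (\<forall>c\<in>ch x. f c <o r) \<longrightarrow> f x \<le>o r)"
        using feq[OF xt] by auto
    qed
  qed
  show ?thesis using P by blast
qed

lemma rank_card:
  fixes t :: "'n set" and ch :: "'n \<Rightarrow> 'n set" and f :: "'n \<Rightarrow> 'o rel" and k :: "'k rel"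
  assumes sa: "\<forall>x\<in>t. Well_order (f x) \<and> (\<forall>c\<in>ch x. f c <o f x)
            \<and> (\<forall>r::'o rel. Well_order r \<and> (\<forall>c\<in>ch x. f c <o r) \<longrightarrow> f x \<le>o r)"
    and sub: "\<forall>x\<in>t. ch x \<subseteq> t" and ck: "Card_order k" and infk: "infinite (Field k)"
    and cch: "\<forall>x\<in>t. |ch x| \<le>o k"
  shows "\<forall>x\<in>t. |Field (f x)| \<le>o k"
proof -
  have "x \<in> t \<longrightarrow> |Field (f x)| \<le>o k" for x
  proof (induction x rule: wf_induct_rule[OF wf_inv_image[OF wf_ordLess, of f]])
    case (1 x)
    show ?case
    proof
      assume xt: "x \<in> t"
      let ?r = "f x"
      have wr: "Well_order ?r" using sa xt by blast
      have lin: "Linear_order ?r" and trr: "trans ?r" and rfr: "Refl ?r" and asr: "antisym ?r"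
        using wr unfolding well_order_on_def linear_order_on_def partial_order_on_def preorder_on_def by auto
      have tot: "\<And>a b. a \<in> Field ?r \<Longrightarrow> b \<in> Field ?r \<Longrightarrow> a \<noteq> b \<Longrightarrow> (a,b) \<in> ?r \<or> (b,a) \<in> ?r"
        using lin unfolding linear_order_on_def total_on_def by blast
      have chlt: "f c <o ?r" if "c \<in> ch x" for c using sa xt that by blast
      have IH: "|Field (f c)| \<le>o k" if "c \<in> ch x" for c
        using 1 sub xt that chlt[OF that] by auto
      have wc: "Well_order (f c)" if "c \<in> ch x" for c using sa sub xt that by blast
      have "\<forall>c\<in>ch x. \<exists>b. b \<in> Field ?r \<and> f c =o Restr ?r (underS ?r b)"
        using ordLess_iff_ordIso_Restr[OF wr] wc chlt by blast
      then obtain b where b: "\<And>c. c \<in> ch x \<Longrightarrow> b c \<in> Field ?r \<and> f c =o Restr ?r (underS ?r (b c))"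
        by metis
      have cover: "Field ?r \<subseteq> (\<Union>c\<in>ch x. under ?r (b c))"
      proof
        fix a assume a: "a \<in> Field ?r"
        show "a \<in> (\<Union>c\<in>ch x. under ?r (b c))"
        proof (rule ccontr)
          assume na: "a \<notin> (\<Union>c\<in>ch x. under ?r (b c))"
          have ofa: "wo_rel.ofilter ?r (underS ?r a)" by (rule wo_rel.underS_ofilter) (simp add: wo_rel_def wr)
          have lt: "f c <o Restr ?r (underS ?r a)" if c: "c \<in> ch x" for c
          proof -
            have n1: "(a, b c) \<notin> ?r" using na c unfolding under_def by blast
            have "a \<noteq> b c" using n1 rfr a unfolding refl_on_def by blast
            hence ba: "(b c, a) \<in> ?r" using tot[OF a] b[OF c] n1 by blast
            have "underS ?r (b c) \<subset> underS ?r a"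
            proof
              show "underS ?r (b c) \<subseteq> underS ?r a"
              proof
                fix y assume "y \<in> underS ?r (b c)"
                hence y: "(y, b c) \<in> ?r" "y \<noteq> b c" unfolding underS_def by auto
                hence "(y, a) \<in> ?r" using ba trr unfolding trans_def by blast
                moreover have "y \<noteq> a" using y n1 by blast
                ultimately show "y \<in> underS ?r a" unfolding underS_def by auto
              qed
              show "underS ?r (b c) \<noteq> underS ?r a"
                using ba \<open>a \<noteq> b c\<close> unfolding underS_def by auto
            qed
            moreover have ofb: "wo_rel.ofilter ?r (underS ?r (b c))" by (rule wo_rel.underS_ofilter) (simp add: wo_rel_def wr)
            ultimately have "Restr ?r (underS ?r (b c)) <o Restr ?r (underS ?r a)"
              using ofilter_subset_ordLess[OF wr ofb ofa] by blast
            thus ?thesis using b[OF c] ordIso_ordLess_trans by blast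
          qed
          have "Well_order (Restr ?r (underS ?r a))" using Well_order_Restr wr by blast
          hence le: "?r \<le>o Restr ?r (underS ?r a)" using sa xt lt by blast
          have "underS ?r a \<subset> Field ?r" using a unfolding underS_def Field_def by auto
          hence "Restr ?r (underS ?r a) <o ?r" using ofilter_ordLess[OF wr ofa] by blast
          thus False using le not_ordLess_ordLeq by blast
        qed
      qed
      have kne: "Field k \<noteq> {}" using infk by auto
      have "|\<Union>c\<in>ch x. under ?r (b c)| \<le>o k"
      proof (rule card_of_UNION_ordLeq_infinite_Field[OF infk ck])
        show "|ch x| \<le>o k" using cch xt by blast
        show "\<forall>c\<in>ch x. |under ?r (b c)| \<le>o k"
        proof
          fix c assume c: "c \<in> ch x"
          have ueq: "under ?r (b c) = {b c} \<union> underS ?r (b c)"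
            using rfr b[OF c] unfolding under_def underS_def refl_on_def by auto
          have ofb: "wo_rel.ofilter ?r (underS ?r (b c))" by (rule wo_rel.underS_ofilter) (simp add: wo_rel_def wr)
          have fe: "Field (Restr ?r (underS ?r (b c))) = underS ?r (b c)"
            using Field_Restr_ofilter[OF wr ofb] .
          have "Restr ?r (underS ?r (b c)) \<le>o f c" using b[OF c] ordIso_iff_ordLeq by blast
          hence "|underS ?r (b c)| \<le>o |Field (f c)|" using card_of_mono2 fe by fastforce
          hence u1: "|underS ?r (b c)| \<le>o k" using IH[OF c] ordLeq_transitive by blast
          have u2: "|{b c}| \<le>o k" using Card_order_singl_ordLeq[OF ck kne] .
          show "|under ?r (b c)| \<le>o k" unfolding ueq
            using card_of_Un_ordLeq_infinite_Field[OF infk u2 u1 ck] .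
        qed
      qed
      thus "|Field (f x)| \<le>o k" using card_of_mono1[OF cover] ordLeq_transitive by blast
    qed
  qed
  thus ?thesis by blast
qed

lemma ctree_nonempty: "xs \<in> ctree R s \<Longrightarrow> xs \<noteq> []"
  by (induction rule: ctree.induct) auto

lemma ctree_snoc:
  assumes "xs @ [y] \<in> ctree R s" and "xs \<noteq> []"
  shows "xs \<in> ctree R s \<and> (last xs, y) \<in> R"
  using assms by (cases rule: ctree.cases) auto

lemma ctree_hd: "xs \<in> ctree R s \<Longrightarrow> hd xs = s"
proof (induction rule: ctree.induct)
  case (step xs y) thus ?case using ctree_nonempty[OF step.hyps(1)] by simp
qed simp

lemma rt_props:
  assumes "xs \<in> ranktCt R B s w"
  shows "(s, w) \<in> B" "xs \<in> ctree R s"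
    "length xs \<ge> 2 \<Longrightarrow> (last xs, w) \<in> B \<and> (\<forall>v. (w, v) \<in> R\<^sup>+ \<longrightarrow> (last xs, v) \<notin> B)"
  using assms unfolding ranktCt_def by (auto split: if_splits)

lemma fullpath_trancl: "fullpath R \<delta> \<Longrightarrow> (\<delta> 0, \<delta> (Suc n)) \<in> R\<^sup>+"
proof (induction n)
  case 0 thus ?case unfolding fullpath_def by auto
next
  case (Suc n) thus ?case unfolding fullpath_def by (meson trancl.trancl_into_trancl)
qed

lemma rt_wf:
  assumes sks: "SKS R L B"
  shows "wf {(c,x). x \<in> ranktCt R B s w \<and> c \<in> children (ranktCt R B s w) x}"
proof -
  let ?t = "ranktCt R B s w"
  { fix g assume g: "\<forall>i. (g (Suc i), g i) \<in> {(c,x). x \<in> ?t \<and> c \<in> children ?t x}"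
    have gt: "g i \<in> ?t" for i using g[rule_format, of i] by simp
    have gs: "\<exists>y. g (Suc i) = g i @ [y]" for i using g[rule_format, of i] unfolding children_def by simp
    define \<sigma> where "\<sigma> i = last (g i)" for i
    have step: "(\<sigma> i, \<sigma> (Suc i)) \<in> R \<and> length (g (Suc i)) \<ge> 2" for i
    proof -
      obtain y where y: "g (Suc i) = g i @ [y]" using gs by blast
      have ne: "g i \<noteq> []" by (rule ctree_nonempty[OF rt_props(2)[OF gt[of i]]])
      have "(last (g i), y) \<in> R" using ctree_snoc[OF _ ne] rt_props(2)[OF gt[of "Suc i"]] y by simp
      moreover have "length (g (Suc i)) \<ge> 2" using y ne by (cases "g i") auto
      ultimately show ?thesis unfolding \<sigma>_def using y by simp
    qed
    have fp: "fullpath R \<sigma>" unfolding fullpath_def using step by blast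
    have sw: "(s, w) \<in> B" by (rule rt_props(1)[OF gt[of 0]])
    have s0: "(\<sigma> 0, w) \<in> B"
    proof (cases "length (g 0) \<ge> 2")
      case True thus ?thesis using rt_props(3)[OF gt[of 0]] unfolding \<sigma>_def by blast
    next
      case False
      have c: "g 0 \<in> ctree R s" by (rule rt_props(2)[OF gt[of 0]])
      have "g 0 \<noteq> []" "hd (g 0) = s" using ctree_nonempty[OF c] ctree_hd[OF c] by auto
      with False have "g 0 = [s]" by (cases "g 0") (auto simp: Suc_le_eq)
      thus ?thesis using sw unfolding \<sigma>_def by simp
    qed
    have "\<forall>\<sigma>'. fullpath R \<sigma>' \<and> \<sigma>' 0 = \<sigma> 0 \<longrightarrow> (\<exists>\<delta>. fullpath R \<delta> \<and> \<delta> 0 = w \<and> match B \<sigma>' \<delta>)"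
      using sks s0 unfolding SKS_def by (elim allE[of _ "\<sigma> 0"] allE[of _ w]) simp
    then obtain \<delta> where d: "fullpath R \<delta>" "\<delta> 0 = w" "match B \<sigma> \<delta>"
      using fp by blast
    then obtain \<pi> \<xi> where pi: "\<pi> \<in> INC" "\<xi> \<in> INC"
      and m: "\<forall>i k. \<pi> i \<le> k \<and> k < \<pi> (Suc i) \<longrightarrow> (\<sigma> k, \<delta> (\<xi> i)) \<in> B"
      unfolding match_def by blast
    have sm: "strict_mono \<pi>" "\<pi> 0 = 0" "strict_mono \<xi>" "\<xi> 0 = 0"
      using pi unfolding INC_def by auto
    have l1: "\<pi> 1 < \<pi> (Suc 1)" using strict_monoD[OF sm(1), of 1 "Suc 1"] by simp
    have l2: "0 < \<pi> 1" using strict_monoD[OF sm(1), of 0 1] sm(2) by simp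
    have l3: "0 < \<xi> 1" using strict_monoD[OF sm(3), of 0 1] sm(4) by simp
    obtain a where a: "\<pi> 1 = Suc a" using l2 gr0_implies_Suc by blast
    obtain b where b: "\<xi> 1 = Suc b" using l3 gr0_implies_Suc by blast
    have ab: "\<pi> 1 = Suc a" "\<xi> 1 = Suc b" using a b by auto
    have "(\<sigma> (\<pi> 1), \<delta> (\<xi> 1)) \<in> B" by (rule m[rule_format]) (use l1 in simp)
    moreover have "(w, \<delta> (\<xi> 1)) \<in> R\<^sup>+" using fullpath_trancl[OF d(1), of b] d(2) ab by simp
    moreover have "length (g (\<pi> 1)) \<ge> 2" using step[of a] ab by simp
    ultimately have False using rt_props(3)[OF gt[of "\<pi> 1"]] unfolding \<sigma>_def by simp
  }
  thus ?thesis unfolding wf_iff_no_infinite_down_chain by blast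
qed

lemma rt_children_card:
  assumes "lts S R" and "x \<in> ranktCt R B s w"
  shows "|children (ranktCt R B s w) x| \<le>o |S|"
proof -
  have ne: "x \<noteq> []" by (rule ctree_nonempty[OF rt_props(2)[OF assms(2)]])
  have "children (ranktCt R B s w) x \<subseteq> (\<lambda>y. x @ [y]) ` S"
  proof
    fix c assume "c \<in> children (ranktCt R B s w) x"
    then obtain y where c: "c = x @ [y]" "c \<in> ranktCt R B s w" unfolding children_def by auto
    hence "(last x, y) \<in> R" using ctree_snoc[OF _ ne] rt_props(2)[OF c(2)] by simp
    hence "y \<in> S" using assms(1) unfolding lts_def by auto
    thus "c \<in> (\<lambda>y. x @ [y]) ` S" using c by auto
  qed
  thus ?thesis using card_of_mono1 card_of_image ordLeq_transitive by blast
qed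

theorem lemma2:
  fixes S :: "'s set" and R :: "('s \<times> 's) set" and L :: "'s \<Rightarrow> 'l"
    and B :: "('s \<times> 's) set" and k :: "'k rel"
  assumes "lts S R"
    and "B \<subseteq> S \<times> S" and "SKS R L B"
    and "Card_order k" and "(natLeq, k) \<in> ordLeq" and "(card_of S, k) \<in> ordLeq"
    and "s \<in> S" and "w \<in> S"
  shows "(\<exists>f :: 's list \<Rightarrow> 's list rel. size_assignment (ranktCt R B s w) f)
       \<and> (\<forall>f :: 's list \<Rightarrow> 'o rel. size_assignment (ranktCt R B s w) f \<longrightarrow> [s] \<in> ranktCt R B s w
            \<longrightarrow> (card_of (Field (f [s])), k) \<in> ordLeq)"
proof
  let ?t = "ranktCt R B s w"
  have wf: "wf {(c,x). x \<in> ?t \<and> c \<in> children ?t x}" using rt_wf[OF assms(3)] .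
  have sub: "\<forall>x\<in>?t. children ?t x \<subseteq> ?t" unfolding children_def by auto
  show "\<exists>f :: 's list \<Rightarrow> 's list rel. size_assignment ?t f"
  proof -
    have "\<forall>x\<in>?t. |children ?t x| \<le>o |UNIV :: 's list set|" by (simp add: card_of_mono1)
    from exists_rank[OF wf sub this infinite_UNIV_listI]
    show ?thesis unfolding size_assignment_def by blast
  qed
  show "\<forall>f :: 's list \<Rightarrow> 'o rel. size_assignment ?t f \<longrightarrow> [s] \<in> ?t
            \<longrightarrow> (card_of (Field (f [s])), k) \<in> ordLeq"
  proof (intro allI impI)
    fix f :: "'s list \<Rightarrow> 'o rel"
    assume sa: "size_assignment ?t f" and st: "[s] \<in> ?t"
    have "natLeq \<le>o |Field k|" using assms(5) card_of_Field_ordIso[OF assms(4)] ordIso_symmetric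
      ordLeq_ordIso_trans by blast
    hence infk: "infinite (Field k)" using infinite_iff_natLeq_ordLeq by blast
    have cch: "\<forall>x\<in>?t. |children ?t x| \<le>o k"
      using rt_children_card[OF assms(1)] assms(6) ordLeq_transitive by blast
    have "\<forall>x\<in>?t. |Field (f x)| \<le>o k"
      using rank_card[OF _ sub assms(4) infk cch] sa unfolding size_assignment_def by blast
    thus "|Field (f [s])| \<le>o k" using st by blast
  qed
qed

end
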